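(* Consider the system of ordinary differential equations \[ \begin{aligned} \frac{dr_a}{dt} &= m_a\left(\frac{(p_a/\theta_{aa})^{n_{aa}}}{1+(p_a/\theta_{aa})^{n_{aa}}}+\frac{1}{1+(p_b/\theta_b)^{n_b}}\right)-\gamma_a r_a+A_1,\\ \frac{dr_b}{dt} &= \frac{m_b}{1+(p_a/\theta_a)^{n_a}}-\gamma_b r_b+B_1,\\ \frac{dp_a}{dt} &= k_a r_a-\delta_a p_a,\qquad \frac{dp_b}{dt} = k_b r_b-\delta_b p_b, \end{aligned} \] where $m_a,m_b,\gamma_a,\gamma_b,k_a,k_b,\delta_a,\delta_b,\theta_a,\theta_b,\theta_{aa}>0$, $A_1,B_1\ge 0$, and $n_a,n_b,n_{aa}$ are positive integers. Let $S^*=(r_a^*,r_b^*,p_a^*,p_b^* )$ be a steady state of this system with $p_a^*>0$, $p_b^*>0$. Set, with $p_a=p_a^*$, $p_b=p_b^*$, \[ X=\frac{m_a n_{aa}\theta_{aa}^{n_{aa}}p_a^{n_{aa}-1}}{(\theta_{aa}^{n_{aa}}+p_a^{n_{aa}})^2},\quad Y=-\frac{m_a n_b\theta_b^{n_b}p_b^{n_b-1}}{(\theta_b^{n_b}+p_b^{n_b})^2},\quad Z=-\frac{m_b n_a p_a^{n_a-1}\theta_a^{n_a}}{(p_a^{n_a}+\theta_a^{n_a})^2}, \] and \[ \begin{aligned} \epsilon_1&=\gamma_a+\gamma_b+\delta_a+\delta_b,\\ \epsilon_2&=\gamma_a\gamma_b+(\gamma_a+\gamma_b)(\delta_a+\delta_b)+\delta_a\delta_b-k_aX,\\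 \epsilon_3&=\delta_a\delta_b(\gamma_a+\gamma_b)+(\delta_a+\delta_b)\gamma_a\gamma_b-k_a(\delta_b+\gamma_b)X,\\ \epsilon_4&=\gamma_a\gamma_b\delta_a\delta_b-k_ak_bYZ-k_a\gamma_b\delta_bX. \end{aligned} \] If $\epsilon_1>0$, $\epsilon_3>0$, $\epsilon_4>0$ and $\epsilon_1\epsilon_2\epsilon_3-\epsilon_1^2\epsilon_4-\epsilon_3^2>0$, then $S^*$ is locally asymptotically stable.
   Context: This models a two-gene network in which gene $a$ is co-regulated by activation from its own protein $p_a$ and repression by protein $p_b$ (combined via a non-competitive OR logic, i.e. the sum of the two regulatory terms), and gene $b$ is repressed by $p_a$; $r_a,r_b$ are mRNA concentrations and $p_a,p_b$ protein concentrations. A steady state is a point where all four right-hand sides vanish. *)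

theory Defs
  imports "HOL-Analysis.Analysis"
begin

type_synonym state4 = "real \<times> real \<times> real \<times> real"

definition gene_field ::
  "real \<Rightarrow> real \<Rightarrow> real \<Rightarrow> real \<Rightarrow> real \<Rightarrow> real \<Rightarrow> real \<Rightarrow> real \<Rightarrow>
   real \<Rightarrow> real \<Rightarrow> real \<Rightarrow> nat \<Rightarrow> nat \<Rightarrow> nat \<Rightarrow> real \<Rightarrow> real \<Rightarrow> state4 \<Rightarrow> state4" where
  "gene_field ma mb ga gb ka kb da db tha thb thaa na nb naa A1 B1 s =
     (case s of (ra, rb, pa, pb) \<Rightarrow>
       ( ma * ((pa / thaa) ^ naa / (1 + (pa / thaa) ^ naa) + 1 / (1 + (pb / thb) ^ nb))
           - ga * ra + A1,
         mb / (1 + (pa / tha) ^ na) - gb * rb + B1,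
         ka * ra - da * pa,
         kb * rb - db * pb))"

definition solution_on :: "('a::real_normed_vector \<Rightarrow> 'a) \<Rightarrow> (real \<Rightarrow> 'a) \<Rightarrow> real set \<Rightarrow> bool" where
  "solution_on f x I \<longleftrightarrow> (\<forall>t\<in>I. (x has_vector_derivative f (x t)) (at t within I))"

definition locally_asymptotically_stable :: "('a::real_normed_vector \<Rightarrow> 'a) \<Rightarrow> 'a \<Rightarrow> bool" where
  "locally_asymptotically_stable f S \<longleftrightarrow>
     f S = 0 \<and>
     (\<forall>\<epsilon>>0. \<exists>\<delta>>0. \<forall>x T. solution_on f x {0..<T} \<and> dist (x 0) S < \<delta> \<longrightarrow>
                       (\<forall>t\<in>{0..<T}. dist (x t) S < \<epsilon>)) \<and>
     (\<exists>\<delta>>0. \<forall>y. dist y S < \<delta> \<longrightarrow>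
        (\<exists>x. solution_on f x {0..} \<and> x 0 = y) \<and>
        (\<forall>x. solution_on f x {0..} \<and> x 0 = y \<longrightarrow> (x \<longlongrightarrow> S) at_top))"

end

theory Submission
  imports Defs
begin

lemma chain_real:
  fixes V :: "'a::real_normed_vector \<Rightarrow> real"
  assumes "(V has_derivative DV) (at (x t))" "(x has_vector_derivative v) (at t)"
  shows "((\<lambda>s. V (x s)) has_real_derivative DV v) (at t)"
proof -
  have bl: "linear DV" using assms(1) by (simp add: has_derivative_bounded_linear bounded_linear.linear)
  have "((\<lambda>s. V (x s)) has_derivative (\<lambda>h. DV (h *\<^sub>R v))) (at t)"
    using has_derivative_compose[OF assms(2)[unfolded has_vector_derivative_def] assms(1)] .
  moreover have "(\<lambda>h. DV (h *\<^sub>R v)) = (*) (DV v)"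
    using linear_scale[OF bl] by (auto simp: mult.commute)
  ultimately show ?thesis by (simp add: has_field_derivative_def)
qed

lemma lyap_mono:
  fixes E :: "real \<Rightarrow> real"
  assumes cont: "continuous_on {0..t1} E"
    and d: "\<And>s. 0 < s \<Longrightarrow> s < t1 \<Longrightarrow> \<exists>l. (E has_real_derivative l) (at s) \<and> l \<le> 0"
    and t1: "0 \<le> t1"
  shows "E t1 \<le> E 0"
proof (cases "t1 = 0")
  case True then show ?thesis by simp
next
  case False
  then have "0 < t1" using t1 by simp
  from MVT[OF this cont] d obtain l z where "0 < z" "z < t1" "DERIV E z :> l" "E t1 - E 0 = (t1 - 0) * l"
    by (metis real_differentiable_def)
  moreover obtain l' where "DERIV E z :> l'" "l' \<le> 0" using d \<open>0 < z\<close> \<open>z < t1\<close> by blast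
  ultimately have "l \<le> 0" "E t1 - E 0 = t1 * l" using DERIV_unique by auto
  then show ?thesis using t1 mult_nonneg_nonpos[of t1 l] by linarith
qed

lemma lyap_abstract:
  fixes f F :: "'a::real_normed_vector \<Rightarrow> 'a" and V :: "'a \<Rightarrow> real" and DV :: "'a \<Rightarrow> 'a \<Rightarrow> real"
  assumes m: "0 < m" and Vlo: "\<And>u. m * (dist u S)^2 \<le> V u" and Vhi: "\<And>u. V u \<le> M * (dist u S)^2"
    and Vd: "\<And>u. (V has_derivative DV u) (at u)"
    and c: "0 < c" and dec: "\<And>u. u \<in> ball S r \<Longrightarrow> DV u (f u) \<le> - c * V u"
    and Ff: "\<And>u. u \<in> ball S r \<Longrightarrow> F u = f u"
    and sol: "solution_on F x {0..<T}" and T: "0 < T" and rho: "0 < \<rho>" "\<rho> \<le> r"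
    and x0: "M * (dist (x 0) S)^2 < m * \<rho>^2"
  shows "\<forall>t\<in>{0..<T}. dist (x t) S < \<rho> \<and> V (x t) \<le> V (x 0) * exp (- c * t)"
proof -
  have cont: "continuous_on {0..<T} x"
    using sol unfolding solution_on_def
    by (meson continuous_on_eq_continuous_within has_vector_derivative_continuous)
  have Vc: "continuous_on UNIV V"
    using Vd by (meson continuous_on_eq_continuous_within has_derivative_continuous)
  have dint: "(x has_vector_derivative F (x t)) (at t)" if "0 < t" "t < T" for t
  proof -
    have "at t within {0..<T} = at t" by (rule at_within_open_subset[of _ "{0<..<T}"]) (use that in auto)
    then show ?thesis using sol that unfolding solution_on_def by (metis atLeastLessThan_iff less_eq_real_def)
  qed
  have mono: "V (x t1) \<le> V (x 0) * exp (- c * t1)"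
    if t1: "0 \<le> t1" "t1 < T" and inb: "\<forall>s\<in>{0..<t1}. dist (x s) S < \<rho>" for t1
  proof -
    define E where "E s = V (x s) * exp (c * s)" for s
    have "E t1 \<le> E 0"
    proof (rule lyap_mono[OF _ _ t1(1)])
      have "continuous_on {0..t1} x" using cont by (rule continuous_on_subset) (use t1 in auto)
      then show "continuous_on {0..t1} E" unfolding E_def
        by (intro continuous_intros continuous_on_compose2[OF Vc]) auto
    next
      fix s assume s: "0 < s" "s < t1"
      have "dist (x s) S < \<rho>" using inb s by auto
      then have xb: "x s \<in> ball S r" using rho by (auto simp: dist_commute)
      have d1: "((\<lambda>s. V (x s)) has_real_derivative DV (x s) (F (x s))) (at s)"
        by (rule chain_real[OF Vd dint]) (use s t1 in auto)
      have "(E has_real_derivative DV (x s) (F (x s)) * exp (c * s) + V (x s) * (exp (c * s) * c)) (at s)"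
        unfolding E_def by (auto intro!: derivative_eq_intros d1)
      moreover have "DV (x s) (F (x s)) * exp (c * s) + V (x s) * (exp (c * s) * c) \<le> 0"
      proof -
        have "DV (x s) (F (x s)) + c * V (x s) \<le> 0" using dec[OF xb] Ff[OF xb] by simp
        then have "exp (c * s) * (DV (x s) (F (x s)) + c * V (x s)) \<le> 0"
          using mult_nonneg_nonpos[of "exp (c * s)"] by simp
        then show ?thesis by (simp add: algebra_simps)
      qed
      ultimately show "\<exists>l. (E has_real_derivative l) (at s) \<and> l \<le> 0" by blast
    qed
    then have "V (x t1) * exp (c * t1) \<le> V (x 0)" by (simp add: E_def)
    then have "V (x t1) * exp (c * t1) * exp (- c * t1) \<le> V (x 0) * exp (- c * t1)"
      by (simp add: mult_right_mono)
    then show ?thesis by (simp add: mult.assoc flip: exp_add)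
  qed
  have V0: "V (x 0) < m * \<rho>^2" using Vhi[of "x 0"] x0 by linarith
  have V0nn: "0 \<le> V (x 0)" using Vlo[of "x 0"] m by (smt (verit) mult_nonneg_nonneg zero_le_power2)
  have inball: "dist (x t) S < \<rho>" if t: "0 \<le> t" "t < T" for t
  proof (rule ccontr)
    assume "\<not> dist (x t) S < \<rho>"
    define K where "K = {0..t} \<inter> (\<lambda>s. dist (x s) S) -` {\<rho>..}"
    have ct: "continuous_on {0..t} (\<lambda>s. dist (x s) S)"
      using cont by (intro continuous_intros) (rule continuous_on_subset, use t in auto)
    have "closed K" unfolding K_def by (rule continuous_closed_preimage[OF ct]) auto
    moreover have "bounded K" unfolding K_def by (rule bounded_subset[of "{0..t}"]) auto
    ultimately have cK: "compact K" by (simp add: compact_eq_bounded_closed)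
    have neK: "K \<noteq> {}" using \<open>\<not> dist (x t) S < \<rho>\<close> t unfolding K_def by auto
    obtain ts where ts: "ts \<in> K" "\<And>s. s \<in> K \<Longrightarrow> ts \<le> s"
      using compact_attains_inf[OF cK neK] by metis
    have ts1: "0 \<le> ts" "ts < T" "\<rho> \<le> dist (x ts) S" using ts(1) t unfolding K_def by auto
    have "\<forall>s\<in>{0..<ts}. dist (x s) S < \<rho>"
    proof
      fix s assume "s \<in> {0..<ts}"
      then have "s \<notin> K" using ts(2)[of s] by auto
      then show "dist (x s) S < \<rho>" using \<open>s \<in> {0..<ts}\<close> ts1 ts(1) unfolding K_def by auto
    qed
    from mono[OF ts1(1,2) this] have "V (x ts) \<le> V (x 0) * exp (- c * ts)" .
    also have "\<dots> \<le> V (x 0)" using V0nn c ts1 by (simp add: mult_left_le)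
    also have "\<dots> < m * \<rho>^2" by (rule V0)
    also have "\<dots> \<le> m * (dist (x ts) S)^2" using ts1 rho m by (simp add: power_mono)
    also have "\<dots> \<le> V (x ts)" by (rule Vlo)
    finally show False by simp
  qed
  show ?thesis
  proof
    fix t assume "t \<in> {0..<T}"
    then have t: "0 \<le> t" "t < T" by auto
    have "\<forall>s\<in>{0..<t}. dist (x s) S < \<rho>" using inball t by auto
    then show "dist (x t) S < \<rho> \<and> V (x t) \<le> V (x 0) * exp (- c * t)" using mono[OF t] inball[OF t] by simp
  qed
qed

lemma at_loc: "0 \<le> t \<Longrightarrow> t < b \<Longrightarrow> at t within {0..b} = at t within {0::real..}"
  by (rule at_within_nhd[of _ "{..<b}"]) auto

lemma indef_deriv:
  fixes h :: "real \<Rightarrow> 'a::banach"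
  assumes "continuous_on {0..} h" "0 \<le> t"
  shows "((\<lambda>u. integral {0..u} h) has_vector_derivative h t) (at t within {0..})"
proof -
  have "continuous_on {0..t+1} h" using assms(1) by (rule continuous_on_subset) auto
  from integral_has_vector_derivative[OF this] assms(2)
  have "((\<lambda>u. integral {0..u} h) has_vector_derivative h t) (at t within {0..t+1})" by simp
  then show ?thesis using at_loc[of t "t+1"] assms(2) by simp
qed

lemma power_has_integral:
  fixes t C :: real
  assumes "0 \<le> t"
  shows "((\<lambda>s. C * s^n) has_integral C * t^(Suc n) / Suc n) {0..t}"
proof -
  have "((\<lambda>s. C * s^n) has_integral (C * t^(Suc n) / Suc n - C * 0^(Suc n) / Suc n)) {0..t}"
  proof (rule fundamental_theorem_of_calculus[OF assms])
    fix s :: real assume "s \<in> {0..t}"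
    have "((\<lambda>s. s^(Suc n)) has_real_derivative real (Suc n) * s^n) (at s within {0..t})"
      using DERIV_pow[of "Suc n" s] by (simp add: has_field_derivative_at_within)
    then have "((\<lambda>s. C * s^(Suc n) / Suc n) has_real_derivative C * (real (Suc n) * s^n) / Suc n) (at s within {0..t})"
      by (intro DERIV_cdivide DERIV_cmult)
    then show "((\<lambda>s. C * s^(Suc n) / Suc n) has_vector_derivative C * s^n) (at s within {0..t})"
      by (simp add: has_real_derivative_iff_has_vector_derivative)
  qed
  then show ?thesis by simp
qed

lemma picard_exists:
  fixes g :: "'a::banach \<Rightarrow> 'a"
  assumes L: "0 < L" and lip: "\<And>u v. norm (g u - g v) \<le> L * norm (u - v)"
  shows "\<exists>x. solution_on g x {0..} \<and> x 0 = y"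
proof -
  have gc: "continuous_on UNIV g"
  proof (rule continuous_on_iff[THEN iffD2], intro ballI allI impI)
    fix u and e :: real assume "0 < e"
    show "\<exists>d>0. \<forall>v\<in>UNIV. dist v u < d \<longrightarrow> dist (g v) (g u) < e"
    proof (intro exI[of _ "e / L"] conjI ballI impI)
      fix v assume "dist v u < e / L"
      then have "L * dist v u < e" using L by (simp add: field_simps)
      then show "dist (g v) (g u) < e" using lip[of v u] by (simp add: dist_norm)
    qed (use L \<open>0 < e\<close> in simp)
  qed
  define P where "P = rec_nat (\<lambda>t::real. y) (\<lambda>k p t. y + integral {0..t} (\<lambda>s. g (p s)))"
  have P0: "P 0 = (\<lambda>t. y)" by (simp add: P_def)
  have PS: "P (Suc k) = (\<lambda>t. y + integral {0..t} (\<lambda>s. g (P k s)))" for k by (simp add: P_def)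
  have Pc: "continuous_on {0..} (P k)" for k
  proof (induction k)
    case 0 then show ?case by (simp add: P0)
  next
    case (Suc k)
    have hc: "continuous_on {0..} (\<lambda>s. g (P k s))"
      using Suc by (intro continuous_on_compose2[OF gc]) auto
    show ?case unfolding PS continuous_on_eq_continuous_within
    proof
      fix t :: real assume "t \<in> {0..}"
      then show "continuous (at t within {0..}) (\<lambda>t. y + integral {0..t} (\<lambda>s. g (P k s)))"
        by (intro continuous_intros has_vector_derivative_continuous[OF indef_deriv[OF hc]]) auto
    qed
  qed
  have Pint: "(\<lambda>s. g (P k s)) integrable_on {0..t}" for k t
  proof -
    have "continuous_on {0..t} (\<lambda>s. g (P k s))"
      by (intro continuous_on_compose2[OF gc] continuous_on_subset[OF Pc]) auto
    then show ?thesis by (rule integrable_continuous_real)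
  qed
  define N where "N = norm (g y)"
  have bound: "norm (P (Suc k) t - P k t) \<le> N * L^k * t^(Suc k) / fact (Suc k)" if "0 \<le> t" for k t
    using that
  proof (induction k arbitrary: t)
    case 0
    then show ?case by (simp add: PS P0 N_def)
  next
    case (Suc k)
    have "P (Suc (Suc k)) t - P (Suc k) t = integral {0..t} (\<lambda>s. g (P (Suc k) s)) - integral {0..t} (\<lambda>s. g (P k s))"
      by (simp add: PS)
    also have "\<dots> = integral {0..t} (\<lambda>s. g (P (Suc k) s) - g (P k s))"
      by (rule Henstock_Kurzweil_Integration.integral_diff[OF Pint Pint, symmetric])
    also have "norm \<dots> \<le> integral {0..t} (\<lambda>s. (L * (N * L^k / fact (Suc k))) * s^(Suc k))"
    proof (rule integral_norm_bound_integral)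
      show "(\<lambda>s. g (P (Suc k) s) - g (P k s)) integrable_on {0..t}"
        by (intro integrable_diff Pint)
      show "(\<lambda>s. L * (N * L ^ k / fact (Suc k)) * s ^ Suc k) integrable_on {0..t}"
        using power_has_integral[OF Suc.prems] by blast
      fix s assume "s \<in> {0..t}"
      then have "norm (P (Suc k) s - P k s) \<le> N * L^k * s^(Suc k) / fact (Suc k)"
        using Suc.IH by auto
      then have "L * norm (P (Suc k) s - P k s) \<le> L * (N * L^k * s^(Suc k) / fact (Suc k))"
        using L by (intro mult_left_mono) auto
      then show "norm (g (P (Suc k) s) - g (P k s)) \<le> L * (N * L ^ k / fact (Suc k)) * s ^ Suc k"
        using lip[of "P (Suc k) s" "P k s"] by simp
    qed
    also have "\<dots> = L * (N * L^k / fact (Suc k)) * t^(Suc (Suc k)) / Suc (Suc k)"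
      using power_has_integral[OF Suc.prems] by (rule integral_unique)
    also have "\<dots> = N * L^(Suc k) * t^(Suc (Suc k)) / fact (Suc (Suc k))"
      by (simp add: field_simps)
    finally show ?case .
  qed
  define D where "D i t = P (Suc i) t - P i t" for i t
  have Psum: "P k = (\<lambda>t. y + (\<Sum>i<k. D i t))" for k
  proof (rule ext)
    fix t
    have "(\<Sum>i<k. P (Suc i) t - P i t) = P k t - P 0 t" by (rule sum_lessThan_telescope)
    then show "P k t = y + (\<Sum>i<k. D i t)" by (simp add: P0 D_def)
  qed
  define x where "x t = y + (\<Sum>i. D i t)" for t
  have ul: "uniform_limit {0..T} P x sequentially" for T
  proof -
    define Mi where "Mi i = N * L^i * T^(Suc i) / fact (Suc i)" for i
    have "summable (\<lambda>i. (N / L) * ((L * T)^(Suc i) /\<^sub>R fact (Suc i)))"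
      by (intro summable_mult summable_Suc_iff[THEN iffD2] summable_exp_generic)
    moreover have "(\<lambda>i. (N / L) * ((L * T)^(Suc i) /\<^sub>R fact (Suc i))) = Mi"
      using L by (auto simp: Mi_def field_simps power_mult_distrib)
    ultimately have sM: "summable Mi" by simp
    have "norm (D i t) \<le> Mi i" if "t \<in> {0..T}" for i t
    proof -
      have "norm (D i t) \<le> N * L^i * t^(Suc i) / fact (Suc i)" using bound that by (simp add: D_def)
      also have "\<dots> \<le> Mi i" unfolding Mi_def using that L
        by (intro divide_right_mono mult_left_mono power_mono) (auto simp: N_def)
      finally show ?thesis .
    qed
    from Weierstrass_m_test[OF this sM]
    have "uniform_limit {0..T} (\<lambda>n t. \<Sum>i<n. D i t) (\<lambda>t. \<Sum>i. D i t) sequentially" .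
    from uniform_limit_add[OF uniform_limit_const[where c="\<lambda>t. y"] this]
    have "uniform_limit {0..T} (\<lambda>n t. y + (\<Sum>i<n. D i t)) (\<lambda>t. y + (\<Sum>i. D i t)) sequentially" .
    moreover have "P = (\<lambda>n t. y + (\<Sum>i<n. D i t))" using Psum by (intro ext) simp
    moreover have "x = (\<lambda>t. y + (\<Sum>i. D i t))" by (intro ext) (simp add: x_def)
    ultimately show ?thesis by simp
  qed
  have xc: "continuous_on {0..} x"
    unfolding continuous_on_eq_continuous_within
  proof
    fix t :: real assume t: "t \<in> {0..}"
    have "continuous_on {0..t+1} x"
      by (rule uniform_limit_theorem[OF _ ul]) (auto intro!: always_eventually continuous_on_subset[OF Pc])
    then have "continuous (at t within {0..t+1}) x" using t by (simp add: continuous_on_eq_continuous_within)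
    then show "continuous (at t within {0..}) x" using at_loc[of t "t+1"] t by simp
  qed
  have xeq: "x t = y + integral {0..t} (\<lambda>s. g (x s))" if t: "0 \<le> t" for t
  proof -
    have ulg: "uniform_limit {0..t} (\<lambda>k s. g (P k s)) (\<lambda>s. g (x s)) sequentially"
    proof (rule uniform_limitI)
      fix e :: real assume "0 < e"
      then have "\<forall>\<^sub>F n in sequentially. \<forall>s\<in>{0..t}. dist (P n s) (x s) < e / L"
        using L by (intro uniform_limitD[OF ul]) simp
      then show "\<forall>\<^sub>F n in sequentially. \<forall>s\<in>{0..t}. dist (g (P n s)) (g (x s)) < e"
      proof (rule eventually_mono, intro ballI)
        fix n s assume "\<forall>s\<in>{0..t}. dist (P n s) (x s) < e / L" "s \<in> {0..t}"
        then have "L * dist (P n s) (x s) < e" using L by (simp add: field_simps)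
        then show "dist (g (P n s)) (g (x s)) < e" using lip[of "P n s" "x s"] by (simp add: dist_norm)
      qed
    qed
    obtain I J where IJ: "\<And>n. ((\<lambda>s. g (P n s)) has_integral I n) {0..t}"
      "((\<lambda>s. g (x s)) has_integral J) {0..t}" "I \<longlonglongrightarrow> J"
      by (rule uniform_limit_integral[OF ulg]) (auto intro!: continuous_on_compose2[OF gc] continuous_on_subset[OF Pc])
    have "(\<lambda>n. integral {0..t} (\<lambda>s. g (P n s))) = I"
      using IJ(1) by (auto intro!: ext integral_unique)
    then have "(\<lambda>n. P (Suc n) t) \<longlonglongrightarrow> y + J"
      unfolding PS using IJ(3) by (auto intro!: tendsto_intros)
    moreover have "(\<lambda>n. P (Suc n) t) \<longlonglongrightarrow> x t"
      using uniform_limit_on_subset[OF ul[of t], of "{t}"] t by (auto intro: LIMSEQ_Suc)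
    ultimately have "x t = y + J" using LIMSEQ_unique by blast
    then show ?thesis using IJ(2) by (simp add: integral_unique)
  qed
  have "solution_on g x {0..}"
    unfolding solution_on_def
  proof
    fix t :: real assume t: "t \<in> {0..}"
    have hc: "continuous_on {0..} (\<lambda>s. g (x s))" by (intro continuous_on_compose2[OF gc xc]) auto
    have "((\<lambda>u. y + integral {0..u} (\<lambda>s. g (x s))) has_vector_derivative g (x t)) (at t within {0..})"
      using indef_deriv[OF hc] t by (auto intro!: derivative_eq_intros)
    then show "(x has_vector_derivative g (x t)) (at t within {0..})"
      by (rule has_vector_derivative_transform[OF t, rotated]) (simp add: xeq)
  qed
  moreover have "x 0 = y" using xeq[of 0] by simp
  ultimately show ?thesis by blast
qed

locale lin = fixes g1 g2 d1 d2 k1 k2 X Y Z :: real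
begin

definition Jl :: "state4 \<Rightarrow> state4" where
  "Jl = (\<lambda>(h1,h2,h3,h4). (-g1*h1 + X*h3 + Y*h4, -g2*h2 + Z*h3, k1*h1 - d1*h3, k2*h2 - d2*h4))"

definition z1 :: "state4 \<Rightarrow> real" where "z1 = (\<lambda>(h1,h2,h3,h4). h3)"
definition z2 :: "state4 \<Rightarrow> real" where "z2 = (\<lambda>(h1,h2,h3,h4). k1*h1 - d1*h3)"
definition z3 :: "state4 \<Rightarrow> real" where
  "z3 = (\<lambda>(h1,h2,h3,h4). k1*(-g1*h1 + X*h3 + Y*h4) - d1*(k1*h1 - d1*h3))"
definition z4 :: "state4 \<Rightarrow> real" where "z4 h = z3 (Jl h)"

definition "a1 = g1+g2+d1+d2"
definition "a2 = g1*g2 + (g1+g2)*(d1+d2) + d1*d2 - k1*X"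
definition "a3 = d1*d2*(g1+g2) + (d1+d2)*g1*g2 - k1*(d2+g2)*X"
definition "a4 = g1*g2*d1*d2 - k1*k2*Y*Z - k1*g2*d2*X"

definition "s1 = a1"
definition "s2 = a2 - a3/a1"
definition "s4 = a4/s2"
definition "s3 = a3/a1 - s4"

definition "w1 (h::state4) = z1 h"
definition "w2 (h::state4) = z2 h"
definition "w3 (h::state4) = z3 h + s4 * z1 h"
definition "w4 (h::state4) = z4 h + (s3+s4) * z2 h"

definition "Wq (h::state4) = s2 * s3 * s4*(w1 h)^2 + s2 * s3*(w2 h)^2 + s2*(w3 h)^2 + (w4 h)^2"
definition "Bq (h::state4) (v::state4) = s2 * s3 * s4*(w1 h * w1 v) + s2 * s3*(w2 h * w2 v) + s2*(w3 h * w3 v) + w4 h * w4 v"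

lemma z_J:
  "z1 (Jl h) = z2 h" "z2 (Jl h) = z3 h" "z3 (Jl h) = z4 h"
  "z4 (Jl h) = -(a1 * z4 h + a2 * z3 h + a3 * z2 h + a4 * z1 h)"
proof -
  obtain h1 h2 h3 h4 where h: "h = (h1,h2,h3,h4)" by (cases h) auto
  show "z1 (Jl h) = z2 h" "z2 (Jl h) = z3 h" "z3 (Jl h) = z4 h"
    by (simp_all add: h z1_def z2_def z3_def z4_def Jl_def algebra_simps)
  show "z4 (Jl h) = -(a1 * z4 h + a2 * z3 h + a3 * z2 h + a4 * z1 h)"
    by (simp add: h z1_def z2_def z3_def z4_def Jl_def a1_def a2_def a3_def a4_def algebra_simps)
qed

lemma w_J:
  assumes "a1 \<noteq> 0" "s2 \<noteq> 0"
  shows "w1 (Jl h) = w2 h" "w2 (Jl h) = w3 h - s4 * w1 h" "w3 (Jl h) = w4 h - s3 * w2 h"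
    "w4 (Jl h) = - s1 * w4 h - s2 * w3 h"
proof -
  have r2: "a2 = s2 + s3 + s4" by (simp add: s2_def s3_def)
  have r3: "a3 = s1 * (s3 + s4)" using assms by (simp add: s1_def s3_def)
  have r4: "a4 = s2 * s4" using assms by (simp add: s4_def)
  show "w1 (Jl h) = w2 h" "w2 (Jl h) = w3 h - s4 * w1 h" "w3 (Jl h) = w4 h - s3 * w2 h"
    by (simp_all add: w1_def w2_def w3_def w4_def z_J algebra_simps)
  show "w4 (Jl h) = - s1 * w4 h - s2 * w3 h"
    unfolding w1_def w2_def w3_def w4_def z_J r2 r3 r4 s1_def[symmetric] by (simp add: algebra_simps)
qed

lemma B_J:
  assumes "a1 \<noteq> 0" "s2 \<noteq> 0"
  shows "Bq h (Jl h) = - s1 * (w4 h)^2"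
  unfolding Bq_def w_J[OF assms] by (simp add: algebra_simps power2_eq_square)

lemma w_lin:
  "w1 (u + v) = w1 u + w1 v" "w2 (u + v) = w2 u + w2 v" "w3 (u + v) = w3 u + w3 v" "w4 (u + v) = w4 u + w4 v"
  "w1 (c *\<^sub>R u) = c * w1 u" "w2 (c *\<^sub>R u) = c * w2 u" "w3 (c *\<^sub>R u) = c * w3 u" "w4 (c *\<^sub>R u) = c * w4 u"
proof -
  obtain u1 u2 u3 u4 where u: "u = (u1,u2,u3,u4)" by (cases u) auto
  obtain v1 v2 v3 v4 where v: "v = (v1,v2,v3,v4)" by (cases v) auto
  show "w1 (u + v) = w1 u + w1 v" "w2 (u + v) = w2 u + w2 v" "w3 (u + v) = w3 u + w3 v" "w4 (u + v) = w4 u + w4 v"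
    "w1 (c *\<^sub>R u) = c * w1 u" "w2 (c *\<^sub>R u) = c * w2 u" "w3 (c *\<^sub>R u) = c * w3 u" "w4 (c *\<^sub>R u) = c * w4 u"
    by (simp_all add: u v w1_def w2_def w3_def w4_def z1_def z2_def z3_def z4_def Jl_def algebra_simps)
qed

lemma w_diff: "w1 (u - v) = w1 u - w1 v" "w2 (u - v) = w2 u - w2 v" "w3 (u - v) = w3 u - w3 v" "w4 (u - v) = w4 u - w4 v"
  using w_lin(1-4)[of "u - v" v] by auto

lemma Bq_lin: "Bq h (u + v) = Bq h u + Bq h v" "Bq h (c *\<^sub>R u) = c * Bq h u"
  "Bq h (u - v) = Bq h u - Bq h v" "Bq h h = Wq h"
  by (simp_all add: Bq_def Wq_def w_lin w_diff algebra_simps power2_eq_square)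

lemma Bq_lin1: "Bq (c *\<^sub>R h) v = c * Bq h v"
  by (simp add: Bq_def w_lin algebra_simps)

lemma Wq_exp: "Wq (h + v) = Wq h + 2 * Bq h v + Wq v" "Wq (c *\<^sub>R h) = c^2 * Wq h"
  "Wq (h - v) = Wq h - 2 * Bq h v + Wq v"
  by (simp_all add: Bq_def Wq_def w_lin w_diff algebra_simps power2_eq_square)

lemma Wq_cont: "continuous_on UNIV Wq"
  unfolding Wq_def w1_def w2_def w3_def w4_def z1_def z2_def z3_def z4_def Jl_def case_prod_unfold
  by (intro continuous_intros)

lemma Wq_nonneg: assumes "s2 > 0" "s3 > 0" "s4 > 0" shows "Wq h \<ge> 0"
  unfolding Wq_def using assms by (intro add_nonneg_nonneg mult_nonneg_nonneg) auto

lemma Wq_pos: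
  assumes "s2 > 0" "s3 > 0" "s4 > 0" "k1 \<noteq> 0" "k2 \<noteq> 0" "Y \<noteq> 0" "h \<noteq> 0"
  shows "Wq h > 0"
proof (rule ccontr)
  assume "\<not> Wq h > 0"
  then have "Wq h = 0" using Wq_nonneg[OF assms(1-3), of h] by linarith
  then have "s2 * s3 * s4*(w1 h)^2 = 0" "s2 * s3*(w2 h)^2 = 0" "s2*(w3 h)^2 = 0" "(w4 h)^2 = 0"
    unfolding Wq_def using assms(1-3)
    by (smt (verit) mult_pos_pos zero_le_power2 mult_nonneg_nonneg)+
  then have "w1 h = 0" "w2 h = 0" "w3 h = 0" "w4 h = 0" using assms(1-3) by auto
  then have zz: "z1 h = 0" "z2 h = 0" "z3 h = 0" "z4 h = 0" by (auto simp: w1_def w2_def w3_def w4_def)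
  obtain h1 h2 h3 h4 where h: "h = (h1,h2,h3,h4)" by (cases h) auto
  have "h3 = 0" using zz by (simp add: h z1_def)
  moreover have "h1 = 0" using zz \<open>h3 = 0\<close> assms by (simp add: h z2_def)
  moreover have "h4 = 0" using zz \<open>h3 = 0\<close> \<open>h1 = 0\<close> assms by (simp add: h z3_def)
  moreover have "h2 = 0" using zz \<open>h3 = 0\<close> \<open>h1 = 0\<close> \<open>h4 = 0\<close> assms by (simp add: h z4_def z3_def Jl_def)
  ultimately show False using assms(7) h by (simp add: zero_prod_def)
qed

end

lemma quad_bounds:
  fixes W :: "'a::euclidean_space \<Rightarrow> real"
  assumes cont: "continuous_on UNIV W" and hom: "\<And>c h. W (c *\<^sub>R h) = c^2 * W h"
    and pos: "\<And>h. h \<noteq> 0 \<Longrightarrow> W h > 0"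
  shows "\<exists>m M. 0 < m \<and> 0 < M \<and> (\<forall>h. m * (norm h)^2 \<le> W h \<and> W h \<le> M * (norm h)^2)"
proof -
  define S where "S = sphere (0::'a) 1"
  obtain b :: 'a where "b \<in> Basis" using nonempty_Basis by blast
  then have ne: "S \<noteq> {}" unfolding S_def by (auto intro!: exI[of _ b])
  have cS: "compact S" unfolding S_def by simp
  have cW: "continuous_on S W" using cont by (rule continuous_on_subset) simp
  obtain x0 where x0: "x0 \<in> S" "\<And>y. y \<in> S \<Longrightarrow> W x0 \<le> W y"
    using continuous_attains_inf[OF cS ne cW] by metis
  obtain x1 where x1: "x1 \<in> S" "\<And>y. y \<in> S \<Longrightarrow> W y \<le> W x1"
    using continuous_attains_sup[OF cS ne cW] by metis
  have "x0 \<noteq> 0" using x0(1) by (auto simp: S_def)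
  then have m: "W x0 > 0" by (rule pos)
  have M: "W x1 > 0" using x1(2)[OF x0(1)] m by linarith
  have W0: "W 0 = 0" using hom[of 0 0] by simp
  have "\<forall>h. W x0 * (norm h)^2 \<le> W h \<and> W h \<le> W x1 * (norm h)^2"
  proof
    fix h :: 'a
    show "W x0 * (norm h)^2 \<le> W h \<and> W h \<le> W x1 * (norm h)^2"
    proof (cases "h = 0")
      case True then show ?thesis by (simp add: W0)
    next
      case False
      define u where "u = (1 / norm h) *\<^sub>R h"
      have uS: "u \<in> S" using False by (simp add: S_def u_def)
      have "h = norm h *\<^sub>R u" using False by (simp add: u_def)
      then have "W h = (norm h)^2 * W u" using hom by metis
      moreover have "W x0 * (norm h)^2 \<le> W u * (norm h)^2" using x0(2)[OF uS] by (rule mult_right_mono) simp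
      moreover have "W u * (norm h)^2 \<le> W x1 * (norm h)^2" using x1(2)[OF uS] by (rule mult_right_mono) simp
      ultimately show ?thesis by (simp add: mult.commute)
    qed
  qed
  then show ?thesis using m M by blast
qed

definition hillA :: "real \<Rightarrow> nat \<Rightarrow> real \<Rightarrow> real" where
  "hillA th n p = (p / th) ^ n / (1 + (p / th) ^ n)"
definition hillR :: "real \<Rightarrow> nat \<Rightarrow> real \<Rightarrow> real" where
  "hillR th n p = 1 / (1 + (p / th) ^ n)"

lemma hillR_deriv:
  assumes "th > 0" "p > 0" "n \<ge> 1"
  shows "(hillR th n has_real_derivative - (real n * th ^ n * p ^ (n - 1) / (th ^ n + p ^ n)^2)) (at p)"
proof -
  obtain k where n: "n = Suc k" using assms(3) by (cases n) auto
  have "0 \<le> (p / th) ^ n" using assms by simp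
  then have pos: "1 + (p / th) ^ n > 0" by linarith
  have d0: "((\<lambda>p. p / th) has_real_derivative 1 / th) (at p)"
    using DERIV_cdivide[OF DERIV_ident, of th] by simp
  have d1: "((\<lambda>p. (p / th) ^ Suc k) has_real_derivative real (Suc k) * (p / th) ^ k * (1 / th)) (at p)"
    using DERIV_power[OF d0, of "Suc k"] by simp
  have d2: "((\<lambda>p. 1 + (p / th) ^ Suc k) has_real_derivative real (Suc k) * (p / th) ^ k * (1 / th)) (at p)"
    using DERIV_add[OF DERIV_const d1] by simp
  have d3: "((\<lambda>p. inverse (1 + (p / th) ^ Suc k)) has_real_derivative
      - (real (Suc k) * (p / th) ^ k * (1 / th) * inverse ((1 + (p / th) ^ Suc k)^2))) (at p)"
    using DERIV_inverse_fun[OF d2] pos n by (simp add: power2_eq_square)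
  have "((\<lambda>p. 1 / (1 + (p / th) ^ Suc k)) has_real_derivative
      - ((real (Suc k) * (p / th) ^ k * (1 / th)) / (1 + (p / th) ^ Suc k)^2)) (at p)"
    using d3 by (simp add: inverse_eq_divide)
  then have "((\<lambda>p. 1 / (1 + (p / th) ^ n)) has_real_derivative
      - ((real n * (p / th) ^ (n - 1) * (1 / th)) / (1 + (p / th) ^ n)^2)) (at p)"
    unfolding n by simp
  moreover have "(real n * (p / th) ^ (n - 1) * (1 / th)) / (1 + (p / th) ^ n)^2
      = real n * th ^ n * p ^ (n - 1) / (th ^ n + p ^ n)^2"
  proof -
    have t: "th ^ n > 0" using assms by simp
    have e: "1 + (p / th) ^ n = (th ^ n + p ^ n) / th ^ n" using t assms(1) by (simp add: power_divide add_divide_distrib)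
    have e2: "(p / th) ^ (n - 1) * (1 / th) = p ^ (n - 1) / th ^ n" using assms unfolding n by (simp add: power_divide)
    have gen: "\<And>q P P1 :: real. q > 0 \<Longrightarrow> q + P > 0 \<Longrightarrow>
        real n * (P1 / q) / ((q + P) / q)^2 = real n * q * P1 / (q + P)^2"
      by (simp add: field_simps power2_eq_square)
    have "th ^ n + p ^ n > 0" using t assms by (simp add: add_pos_nonneg)
    then have "real n * (p ^ (n - 1) / th ^ n) / ((th ^ n + p ^ n) / th ^ n)^2 = real n * th ^ n * p ^ (n - 1) / (th ^ n + p ^ n)^2"
      using gen t by blast
    then show ?thesis unfolding e mult.assoc e2 by (simp only: mult.assoc)
  qed
  ultimately show ?thesis unfolding hillR_def by simp
qed

lemma hillA_eq: assumes "p \<ge> 0" "th > 0" shows "hillA th n p = 1 - hillR th n p"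
proof -
  have "0 \<le> (p / th) ^ n" using assms by simp
  then have pos: "1 + (p / th) ^ n \<noteq> 0" by linarith
  then show ?thesis unfolding hillA_def hillR_def by (simp add: field_simps)
qed

lemma hillA_deriv:
  assumes "th > 0" "p > 0" "n \<ge> 1"
  shows "(hillA th n has_real_derivative (real n * th ^ n * p ^ (n - 1) / (th ^ n + p ^ n)^2)) (at p)"
proof -
  have "((\<lambda>p. 1 - hillR th n p) has_real_derivative 0 - (- (real n * th ^ n * p ^ (n - 1) / (th ^ n + p ^ n)^2))) (at p)"
    by (intro derivative_intros hillR_deriv assms)
  then have "((\<lambda>p. 1 - hillR th n p) has_real_derivative (real n * th ^ n * p ^ (n - 1) / (th ^ n + p ^ n)^2)) (at p)"
    by simp
  then show ?thesis
  proof (rule has_field_derivative_transform_within_open[of _ _ _ "{0<..}"])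
    show "p \<in> {0<..}" using assms by simp
  qed (use assms hillA_eq in auto)
qed

lemma lip_interval:
  fixes \<phi> D :: "real \<Rightarrow> real"
  assumes d: "\<And>p. lo \<le> p \<Longrightarrow> p \<le> hi \<Longrightarrow> (\<phi> has_real_derivative D p) (at p)"
    and c: "continuous_on {lo..hi} D"
  shows "\<exists>K\<ge>0. \<forall>p q. lo \<le> p \<longrightarrow> p \<le> hi \<longrightarrow> lo \<le> q \<longrightarrow> q \<le> hi \<longrightarrow> \<bar>\<phi> p - \<phi> q\<bar> \<le> K * \<bar>p - q\<bar>"
proof -
  have "compact (D ` {lo..hi})" by (rule compact_continuous_image[OF c]) simp
  then obtain K where K: "K > 0" "\<And>x. x \<in> D ` {lo..hi} \<Longrightarrow> norm x \<le> K"
    using compact_imp_bounded bounded_pos by metis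
  have "\<bar>\<phi> p - \<phi> q\<bar> \<le> K * \<bar>p - q\<bar>" if "lo \<le> p" "p \<le> hi" "lo \<le> q" "q \<le> hi" for p q
  proof -
    have "norm (\<phi> p - \<phi> q) \<le> K * norm (p - q)"
    proof (rule field_differentiable_bound[of "{lo..hi}" \<phi> D])
      show "convex {lo..hi}" by simp
      show "(\<phi> has_field_derivative D z) (at z within {lo..hi})" if "z \<in> {lo..hi}" for z
        using d that by (auto intro: has_field_derivative_at_within)
      show "norm (D z) \<le> K" if "z \<in> {lo..hi}" for z using K(2) that by auto
    qed (use that in auto)
    then show ?thesis by simp
  qed
  then show ?thesis using K(1) by (intro exI[of _ K]) auto
qed

definition clp :: "real \<Rightarrow> real \<Rightarrow> real \<Rightarrow> real" where
  "clp lo hi p = max lo (min hi p)"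

lemma clamp_props:
  assumes "lo \<le> hi"
  shows "lo \<le> clp lo hi p" "clp lo hi p \<le> hi" "\<bar>clp lo hi p - clp lo hi q\<bar> \<le> \<bar>p - q\<bar>"
    "lo \<le> p \<Longrightarrow> p \<le> hi \<Longrightarrow> clp lo hi p = p"
  using assms unfolding clp_def by auto

lemma hill_lip:
  assumes "th > 0" "n \<ge> 1" "0 < lo" "lo \<le> hi"
  shows "\<exists>K\<ge>0. \<forall>p q. \<bar>hillA th n (clp lo hi p) - hillA th n (clp lo hi q)\<bar> \<le> K * \<bar>p - q\<bar>"
    "\<exists>K\<ge>0. \<forall>p q. \<bar>hillR th n (clp lo hi p) - hillR th n (clp lo hi q)\<bar> \<le> K * \<bar>p - q\<bar>"
proof -
  have cD: "continuous_on {lo..hi} (\<lambda>p. real n * th ^ n * p ^ (n - 1) / (th ^ n + p ^ n)^2)"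
  proof (intro continuous_intros ballI)
    fix p assume "p \<in> {lo..hi}"
    then have "0 < p" using assms by auto
    then have "0 < th ^ n + p ^ n" using assms by (simp add: add_pos_pos)
    then show "(th ^ n + p ^ n)\<^sup>2 \<noteq> 0" by simp
  qed
  have cD': "continuous_on {lo..hi} (\<lambda>p. - (real n * th ^ n * p ^ (n - 1) / (th ^ n + p ^ n)^2))"
    using continuous_on_minus[OF cD] by simp
  obtain K1 where K1: "K1 \<ge> 0" "\<And>p q. lo \<le> p \<Longrightarrow> p \<le> hi \<Longrightarrow> lo \<le> q \<Longrightarrow> q \<le> hi \<Longrightarrow>
      \<bar>hillA th n p - hillA th n q\<bar> \<le> K1 * \<bar>p - q\<bar>"
    using lip_interval[OF hillA_deriv cD] assms by (metis order_less_le_trans)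
  obtain K2 where K2: "K2 \<ge> 0" "\<And>p q. lo \<le> p \<Longrightarrow> p \<le> hi \<Longrightarrow> lo \<le> q \<Longrightarrow> q \<le> hi \<Longrightarrow>
      \<bar>hillR th n p - hillR th n q\<bar> \<le> K2 * \<bar>p - q\<bar>"
    using lip_interval[OF hillR_deriv cD'] assms by (metis order_less_le_trans)
  note cl = clamp_props[OF assms(4)]
  show "\<exists>K\<ge>0. \<forall>p q. \<bar>hillA th n (clp lo hi p) - hillA th n (clp lo hi q)\<bar> \<le> K * \<bar>p - q\<bar>"
    using K1 cl by (intro exI[of _ K1]) (meson mult_left_mono order_trans)
  show "\<exists>K\<ge>0. \<forall>p q. \<bar>hillR th n (clp lo hi p) - hillR th n (clp lo hi q)\<bar> \<le> K * \<bar>p - q\<bar>"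
    using K2 cl by (intro exI[of _ K2]) (meson mult_left_mono order_trans)
qed

lemma gf_eq: "gene_field ma mb ga gb ka kb da db tha thb thaa na nb naa A1 B1 =
  (\<lambda>u. (ma * (hillA thaa naa (fst (snd (snd u))) + hillR thb nb (snd (snd (snd u)))) - ga * fst u + A1,
        mb * hillR tha na (fst (snd (snd u))) - gb * fst (snd u) + B1,
        ka * fst u - da * fst (snd (snd u)),
        kb * fst (snd u) - db * snd (snd (snd u))))"
proof
  fix u :: state4
  obtain a b c d where u: "u = (a,b,c,d)" by (cases u) auto
  show "gene_field ma mb ga gb ka kb da db tha thb thaa na nb naa A1 B1 u = (ma * (hillA thaa naa (fst (snd (snd u))) + hillR thb nb (snd (snd (snd u)))) - ga * fst u + A1,
        mb * hillR tha na (fst (snd (snd u))) - gb * fst (snd u) + B1,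
        ka * fst u - da * fst (snd (snd u)),
        kb * fst (snd u) - db * snd (snd (snd u)))"
    unfolding u gene_field_def hillA_def hillR_def by simp
qed

lemma gf_deriv:
  assumes pos: "ma > 0" "mb > 0" "tha > 0" "thb > 0" "thaa > 0"
    and npos: "na \<ge> 1" "nb \<ge> 1" "naa \<ge> 1"
    and ppos: "pa > 0" "pb > 0"
    and X_def: "X = ma * real naa * thaa ^ naa * pa ^ (naa - 1) / (thaa ^ naa + pa ^ naa)\<^sup>2"
    and Y_def: "Y = - (ma * real nb * thb ^ nb * pb ^ (nb - 1) / (thb ^ nb + pb ^ nb)\<^sup>2)"
    and Z_def: "Z = - (mb * real na * pa ^ (na - 1) * tha ^ na / (pa ^ na + tha ^ na)\<^sup>2)"
  shows "(gene_field ma mb ga gb ka kb da db tha thb thaa na nb naa A1 B1 has_derivative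
          lin.Jl ga gb da db ka kb X Y Z) (at (ra, rb, pa, pb))"
proof -
  define DA where "DA = real naa * thaa ^ naa * pa ^ (naa - 1) / (thaa ^ naa + pa ^ naa)\<^sup>2"
  define DB where "DB = - (real nb * thb ^ nb * pb ^ (nb - 1) / (thb ^ nb + pb ^ nb)\<^sup>2)"
  define DC where "DC = - (real na * tha ^ na * pa ^ (na - 1) / (tha ^ na + pa ^ na)\<^sup>2)"
  have hA: "(hillA thaa naa has_derivative (*) DA) (at (fst (snd (snd (ra, rb, pa, pb)))))"
    using hillA_deriv[OF pos(5) ppos(1) npos(3)] by (simp add: DA_def has_field_derivative_def)
  have hB: "(hillR thb nb has_derivative (*) DB) (at (snd (snd (snd (ra, rb, pa, pb)))))"
    using hillR_deriv[OF pos(4) ppos(2) npos(2)] by (simp add: DB_def has_field_derivative_def)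
  have hC: "(hillR tha na has_derivative (*) DC) (at (fst (snd (snd (ra, rb, pa, pb)))))"
    using hillR_deriv[OF pos(3) ppos(1) npos(1)] by (simp add: DC_def has_field_derivative_def)
  have p3: "((\<lambda>u::state4. fst (snd (snd u))) has_derivative (\<lambda>h. fst (snd (snd h)))) (at (ra, rb, pa, pb))"
    by (rule has_derivative_fst[OF has_derivative_snd[OF has_derivative_snd[OF has_derivative_ident]]])
  have p4: "((\<lambda>u::state4. snd (snd (snd u))) has_derivative (\<lambda>h. snd (snd (snd h)))) (at (ra, rb, pa, pb))"
    by (rule has_derivative_snd[OF has_derivative_snd[OF has_derivative_snd[OF has_derivative_ident]]])
  have p1: "((\<lambda>u::state4. fst u) has_derivative (\<lambda>h. fst h)) (at (ra, rb, pa, pb))"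
    by (rule has_derivative_fst[OF has_derivative_ident])
  have p2: "((\<lambda>u::state4. fst (snd u)) has_derivative (\<lambda>h. fst (snd h))) (at (ra, rb, pa, pb))"
    by (rule has_derivative_fst[OF has_derivative_snd[OF has_derivative_ident]])
  have 1: "((\<lambda>u::state4. hillA thaa naa (fst (snd (snd u)))) has_derivative (\<lambda>h. DA * fst (snd (snd h)))) (at (ra, rb, pa, pb))"
    using has_derivative_compose[OF p3 hA] .
  have 2: "((\<lambda>u::state4. hillR thb nb (snd (snd (snd u)))) has_derivative (\<lambda>h. DB * snd (snd (snd h)))) (at (ra, rb, pa, pb))"
    using has_derivative_compose[OF p4 hB] .
  have 3: "((\<lambda>u::state4. hillR tha na (fst (snd (snd u)))) has_derivative (\<lambda>h. DC * fst (snd (snd h)))) (at (ra, rb, pa, pb))"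
    using has_derivative_compose[OF p3 hC] .
  have c: "((\<lambda>u. (ma * (hillA thaa naa (fst (snd (snd u))) + hillR thb nb (snd (snd (snd u)))) - ga * fst u + A1,
        mb * hillR tha na (fst (snd (snd u))) - gb * fst (snd u) + B1,
        ka * fst u - da * fst (snd (snd u)),
        kb * fst (snd u) - db * snd (snd (snd u)))) has_derivative
        (\<lambda>h. (ma * (DA * fst (snd (snd h)) + DB * snd (snd (snd h))) - ga * fst h + 0,
        mb * (DC * fst (snd (snd h))) - gb * fst (snd h) + 0,
        ka * fst h - da * fst (snd (snd h)),
        kb * fst (snd h) - db * snd (snd (snd h))))) (at (ra, rb, pa, pb))"
      by (rule has_derivative_Pair[OF
          has_derivative_add[OF has_derivative_diff[OF has_derivative_mult_right[OF has_derivative_add[OF 1 2]] has_derivative_mult_right[OF p1]] has_derivative_const]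
          has_derivative_Pair[OF
          has_derivative_add[OF has_derivative_diff[OF has_derivative_mult_right[OF 3] has_derivative_mult_right[OF p2]] has_derivative_const]
          has_derivative_Pair[OF
          has_derivative_diff[OF has_derivative_mult_right[OF p1] has_derivative_mult_right[OF p3]]
          has_derivative_diff[OF has_derivative_mult_right[OF p2] has_derivative_mult_right[OF p4]]]]])
  have X: "X = ma * DA" and Y: "Y = ma * DB" and Z: "Z = mb * DC"
    by (simp_all add: X_def Y_def Z_def DA_def DB_def DC_def algebra_simps)
  have e: "(\<lambda>h. (ma * (DA * fst (snd (snd h)) + DB * snd (snd (snd h))) - ga * fst h + 0,
      mb * (DC * fst (snd (snd h))) - gb * fst (snd h) + 0,
      ka * fst h - da * fst (snd (snd h)),
      kb * fst (snd h) - db * snd (snd (snd h)))) = lin.Jl ga gb da db ka kb X Y Z"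
    by (rule ext, case_tac h) (simp add: lin.Jl_def X Y Z algebra_simps)
  show ?thesis unfolding gf_eq e[symmetric] by (rule c)
qed

definition clampS :: "real \<Rightarrow> real \<Rightarrow> real \<Rightarrow> real \<Rightarrow> state4 \<Rightarrow> state4" where
  "clampS lo3 hi3 lo4 hi4 u = (fst u, fst (snd u), clp lo3 hi3 (fst (snd (snd u))), clp lo4 hi4 (snd (snd (snd u))))"

lemma norm4_le: "norm ((a, b, c, d) :: state4) \<le> \<bar>a\<bar> + \<bar>b\<bar> + \<bar>c\<bar> + \<bar>d\<bar>"
proof -
  have "norm ((a, b, c, d) :: state4) \<le> norm a + norm (b, c, d)" by (rule norm_Pair_le)
  also have "norm (b, c, d) \<le> norm b + norm (c, d)" by (rule norm_Pair_le)
  also have "norm (c, d) \<le> norm c + norm d" by (rule norm_Pair_le)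
  finally show ?thesis by simp
qed

lemma comp_le:
  fixes h :: state4
  shows "\<bar>fst h\<bar> \<le> norm h" "\<bar>fst (snd h)\<bar> \<le> norm h" "\<bar>fst (snd (snd h))\<bar> \<le> norm h" "\<bar>snd (snd (snd h))\<bar> \<le> norm h"
proof -
  obtain a b c d where h: "h = (a, b, c, d)" by (cases h) auto
  have 1: "norm a \<le> norm h" "norm (b, c, d) \<le> norm h" unfolding h by (rule norm_fst_le, rule norm_snd_le)
  have 2: "norm b \<le> norm (b, c, d)" "norm (c, d) \<le> norm (b, c, d)" by (rule norm_fst_le, rule norm_snd_le)
  have 3: "norm c \<le> norm (c, d)" "norm d \<le> norm (c, d)" by (rule norm_fst_le, rule norm_snd_le)
  show "\<bar>fst h\<bar> \<le> norm h" "\<bar>fst (snd h)\<bar> \<le> norm h" "\<bar>fst (snd (snd h))\<bar> \<le> norm h" "\<bar>snd (snd (snd h))\<bar> \<le> norm h"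
    using 1 2 3 unfolding h by auto
qed

lemma abs_lin2: "0 \<le> (a::real) \<Longrightarrow> 0 \<le> b \<Longrightarrow> \<bar>a * x - b * y\<bar> \<le> a * \<bar>x\<bar> + b * \<bar>y\<bar>"
proof -
  assume "0 \<le> a" "0 \<le> b"
  have "\<bar>a * x - b * y\<bar> \<le> \<bar>a * x\<bar> + \<bar>b * y\<bar>" by (rule abs_triangle_ineq4)
  then show ?thesis using \<open>0 \<le> a\<close> \<open>0 \<le> b\<close> by (simp add: abs_mult)
qed

lemma g_lip:
  assumes pos: "ma > 0" "mb > 0" "ga > 0" "gb > 0" "ka > 0" "kb > 0" "da > 0" "db > 0"
      "tha > 0" "thb > 0" "thaa > 0"
    and npos: "na \<ge> 1" "nb \<ge> 1" "naa \<ge> 1"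
    and lo: "0 < lo3" "lo3 \<le> hi3" "0 < lo4" "lo4 \<le> hi4"
  shows "\<exists>L>0. \<forall>u v. norm (gene_field ma mb ga gb ka kb da db tha thb thaa na nb naa A1 B1 (clampS lo3 hi3 lo4 hi4 u)
      - gene_field ma mb ga gb ka kb da db tha thb thaa na nb naa A1 B1 (clampS lo3 hi3 lo4 hi4 v)) \<le> L * norm (u - v)"
proof -
  obtain K1 where K1: "K1 \<ge> 0" "\<And>p q. \<bar>hillA thaa naa (clp lo3 hi3 p) - hillA thaa naa (clp lo3 hi3 q)\<bar> \<le> K1 * \<bar>p - q\<bar>"
    using hill_lip(1)[OF pos(11) npos(3) lo(1,2)] by blast
  obtain K2 where K2: "K2 \<ge> 0" "\<And>p q. \<bar>hillR thb nb (clp lo4 hi4 p) - hillR thb nb (clp lo4 hi4 q)\<bar> \<le> K2 * \<bar>p - q\<bar>"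
    using hill_lip(2)[OF pos(10) npos(2) lo(3,4)] by blast
  obtain K3 where K3: "K3 \<ge> 0" "\<And>p q. \<bar>hillR tha na (clp lo3 hi3 p) - hillR tha na (clp lo3 hi3 q)\<bar> \<le> K3 * \<bar>p - q\<bar>"
    using hill_lip(2)[OF pos(9) npos(1) lo(1,2)] by blast
  define L where "L = ma * K1 + ma * K2 + ga + mb * K3 + gb + ka + da + kb + db"
  have "0 \<le> ma * K1" "0 \<le> ma * K2" "0 \<le> mb * K3" using pos K1 K2 K3 by simp_all
  then have Lpos: "L > 0" unfolding L_def using pos by linarith
  have "norm (gene_field ma mb ga gb ka kb da db tha thb thaa na nb naa A1 B1 (clampS lo3 hi3 lo4 hi4 u)
      - gene_field ma mb ga gb ka kb da db tha thb thaa na nb naa A1 B1 (clampS lo3 hi3 lo4 hi4 v)) \<le> L * norm (u - v)" for u v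
  proof -
    obtain u1 u2 u3 u4 where u: "u = (u1, u2, u3, u4)" by (cases u) auto
    obtain v1 v2 v3 v4 where v: "v = (v1, v2, v3, v4)" by (cases v) auto
    define d where "d = norm (u - v)"
    have d: "\<bar>u1 - v1\<bar> \<le> d" "\<bar>u2 - v2\<bar> \<le> d" "\<bar>u3 - v3\<bar> \<le> d" "\<bar>u4 - v4\<bar> \<le> d"
      using comp_le[of "u - v"] unfolding d_def u v by auto
    have c3: "\<bar>clp lo3 hi3 u3 - clp lo3 hi3 v3\<bar> \<le> d" using clamp_props(3)[OF lo(2)] d(3) order_trans by blast
    have c4: "\<bar>clp lo4 hi4 u4 - clp lo4 hi4 v4\<bar> \<le> d" using clamp_props(3)[OF lo(4)] d(4) order_trans by blast
    define A where "A = hillA thaa naa (clp lo3 hi3 u3) - hillA thaa naa (clp lo3 hi3 v3)"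
    define B where "B = hillR thb nb (clp lo4 hi4 u4) - hillR thb nb (clp lo4 hi4 v4)"
    define C where "C = hillR tha na (clp lo3 hi3 u3) - hillR tha na (clp lo3 hi3 v3)"
    have A: "\<bar>A\<bar> \<le> K1 * d" using K1(2)[of u3 v3] d(3) K1(1) unfolding A_def by (meson mult_left_mono order_trans)
    have B: "\<bar>B\<bar> \<le> K2 * d" using K2(2)[of u4 v4] d(4) K2(1) unfolding B_def by (meson mult_left_mono order_trans)
    have C: "\<bar>C\<bar> \<le> K3 * d" using K3(2)[of u3 v3] d(3) K3(1) unfolding C_def by (meson mult_left_mono order_trans)
    have diff: "gene_field ma mb ga gb ka kb da db tha thb thaa na nb naa A1 B1 (clampS lo3 hi3 lo4 hi4 u)
      - gene_field ma mb ga gb ka kb da db tha thb thaa na nb naa A1 B1 (clampS lo3 hi3 lo4 hi4 v)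
      = (ma * (A + B) - ga * (u1 - v1), mb * C - gb * (u2 - v2),
         ka * (u1 - v1) - da * (clp lo3 hi3 u3 - clp lo3 hi3 v3),
         kb * (u2 - v2) - db * (clp lo4 hi4 u4 - clp lo4 hi4 v4))"
      unfolding gf_eq clampS_def u v A_def B_def C_def by (simp add: algebra_simps)
    have e1: "\<bar>ma * (A + B) - ga * (u1 - v1)\<bar> \<le> ma * (K1 * d + K2 * d) + ga * d"
    proof -
      have "\<bar>ma * (A + B) - ga * (u1 - v1)\<bar> \<le> ma * \<bar>A + B\<bar> + ga * \<bar>u1 - v1\<bar>"
        using pos by (intro abs_lin2) auto
      also have "\<dots> \<le> ma * (K1 * d + K2 * d) + ga * d"
        using A B d(1) pos abs_triangle_ineq[of A B]
        by (intro add_mono mult_left_mono) auto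
      finally show ?thesis .
    qed
    have e2: "\<bar>mb * C - gb * (u2 - v2)\<bar> \<le> mb * (K3 * d) + gb * d"
      using abs_lin2[of mb gb C "u2 - v2"] pos C d(2) mult_left_mono[OF C, of mb] mult_left_mono[OF d(2), of gb] by linarith
    have e3: "\<bar>ka * (u1 - v1) - da * (clp lo3 hi3 u3 - clp lo3 hi3 v3)\<bar> \<le> ka * d + da * d"
      using abs_lin2[of ka da "u1 - v1" "clp lo3 hi3 u3 - clp lo3 hi3 v3"] pos
        mult_left_mono[OF d(1), of ka] mult_left_mono[OF c3, of da] by linarith
    have e4: "\<bar>kb * (u2 - v2) - db * (clp lo4 hi4 u4 - clp lo4 hi4 v4)\<bar> \<le> kb * d + db * d"
      using abs_lin2[of kb db "u2 - v2" "clp lo4 hi4 u4 - clp lo4 hi4 v4"] pos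
        mult_left_mono[OF d(2), of kb] mult_left_mono[OF c4, of db] by linarith
    have "norm (gene_field ma mb ga gb ka kb da db tha thb thaa na nb naa A1 B1 (clampS lo3 hi3 lo4 hi4 u)
      - gene_field ma mb ga gb ka kb da db tha thb thaa na nb naa A1 B1 (clampS lo3 hi3 lo4 hi4 v))
      \<le> (ma * (K1 * d + K2 * d) + ga * d) + (mb * (K3 * d) + gb * d) + (ka * d + da * d) + (kb * d + db * d)"
      unfolding diff using norm4_le e1 e2 e3 e4 by (smt (verit))
    also have "\<dots> = L * d" unfolding L_def by (simp add: algebra_simps)
    finally show ?thesis unfolding d_def .
  qed
  then show ?thesis using Lpos by blast
qed

lemma delta_ok:
  fixes m M \<rho> d :: real
  assumes "0 < m" "0 < M" "0 \<le> d" "d < \<rho> * sqrt (m / M)"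
  shows "M * d^2 < m * \<rho>^2"
proof -
  have "d^2 < (\<rho> * sqrt (m / M))^2" using assms by (intro power_strict_mono) auto
  also have "\<dots> = \<rho>^2 * (m / M)" using assms by (simp add: power_mult_distrib)
  finally have "d^2 < (\<rho>^2 * m) / M" by simp
  then have "d^2 * M < \<rho>^2 * m" using assms(2) by (simp add: pos_less_divide_eq)
  then show ?thesis by (simp add: mult.commute)
qed

lemma las_from_lyap:
  fixes f g :: "'a::euclidean_space \<Rightarrow> 'a" and V :: "'a \<Rightarrow> real" and DV :: "'a \<Rightarrow> 'a \<Rightarrow> real"
  assumes fS: "f S = 0"
    and m: "0 < m" and M: "0 < M" and Vlo: "\<And>u. m * (dist u S)^2 \<le> V u" and Vhi: "\<And>u. V u \<le> M * (dist u S)^2"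
    and Vd: "\<And>u. (V has_derivative DV u) (at u)"
    and c: "0 < c" and r: "0 < r" and dec: "\<And>u. u \<in> ball S r \<Longrightarrow> DV u (f u) \<le> - c * V u"
    and L: "0 < L" and lip: "\<And>u v. norm (g u - g v) \<le> L * norm (u - v)"
    and gf: "\<And>u. u \<in> ball S r \<Longrightarrow> g u = f u"
  shows "locally_asymptotically_stable f S"
  unfolding locally_asymptotically_stable_def
proof (intro conjI allI impI)
  show "f S = 0" by (rule fS)
next
  fix e :: real assume e: "0 < e"
  define \<rho> where "\<rho> = min e r"
  have \<rho>: "0 < \<rho>" "\<rho> \<le> r" "\<rho> \<le> e" using e r by (auto simp: \<rho>_def)
  define \<delta> where "\<delta> = \<rho> * sqrt (m / M)"
  have \<delta>: "0 < \<delta>" using \<rho> m M by (simp add: \<delta>_def)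
  show "\<exists>\<delta>>0. \<forall>x T. solution_on f x {0..<T} \<and> dist (x 0) S < \<delta> \<longrightarrow> (\<forall>t\<in>{0..<T}. dist (x t) S < e)"
  proof (intro exI[of _ \<delta>] conjI allI impI ballI)
    show "0 < \<delta>" by (rule \<delta>)
    fix x T t assume H: "solution_on f x {0..<T} \<and> dist (x 0) S < \<delta>" and t: "t \<in> {0..<T}"
    have T: "0 < T" using t by auto
    have x0: "M * (dist (x 0) S)^2 < m * \<rho>^2" using delta_ok[OF m M _ H[THEN conjunct2, unfolded \<delta>_def]] by simp
    have "dist (x t) S < \<rho>"
      using lyap_abstract[OF m Vlo Vhi Vd c dec refl H[THEN conjunct1] T \<rho>(1,2) x0] t by auto
    then show "dist (x t) S < e" using \<rho> by linarith
  qed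
next
  define \<delta> where "\<delta> = r * sqrt (m / M)"
  have \<delta>: "0 < \<delta>" using r m M by (simp add: \<delta>_def)
  show "\<exists>\<delta>>0. \<forall>y. dist y S < \<delta> \<longrightarrow>
        (\<exists>x. solution_on f x {0..} \<and> x 0 = y) \<and>
        (\<forall>x. solution_on f x {0..} \<and> x 0 = y \<longrightarrow> (x \<longlongrightarrow> S) at_top)"
  proof (intro exI[of _ \<delta>] conjI allI impI)
    show "0 < \<delta>" by (rule \<delta>)
    fix y assume y: "dist y S < \<delta>"
    have y0: "M * (dist y S)^2 < m * r^2" using delta_ok[OF m M _ y[unfolded \<delta>_def]] by simp
    have restrict: "solution_on F x {0..<T}" if "solution_on F x {0..}" for F x and T :: real
      unfolding solution_on_def
    proof
      fix t :: real assume "t \<in> {0..<T}"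
      then have "t \<in> {0..}" by simp
      then have "(x has_vector_derivative F (x t)) (at t within {0..})" using that unfolding solution_on_def by blast
      then show "(x has_vector_derivative F (x t)) (at t within {0..<T})"
        by (rule has_vector_derivative_within_subset) auto
    qed
    obtain x where xs: "solution_on g x {0..}" "x 0 = y" using picard_exists[OF L lip] by blast
    have inb: "dist (x t) S < r" if "0 \<le> t" for t
    proof -
      have "\<forall>s\<in>{0..<t+1}. dist (x s) S < r \<and> V (x s) \<le> V (x 0) * exp (- c * s)"
        by (rule lyap_abstract[OF m Vlo Vhi Vd c dec gf restrict[OF xs(1)]]) (use that r y0 xs(2) in auto)
      then show ?thesis using that by auto
    qed
    have "solution_on f x {0..}"
      unfolding solution_on_def
    proof
      fix t :: real assume t: "t \<in> {0..}"
      have "x t \<in> ball S r" using inb[of t] t by (auto simp: dist_commute)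
      then have e: "g (x t) = f (x t)" by (rule gf)
      from xs(1) t have "(x has_vector_derivative g (x t)) (at t within {0..})"
        unfolding solution_on_def by blast
      then show "(x has_vector_derivative f (x t)) (at t within {0..})" by (simp only: e)
    qed
    then show "\<exists>x. solution_on f x {0..} \<and> x 0 = y" using xs(2) by blast
  next
    fix y x assume y: "dist y S < \<delta>" and H: "solution_on f x {0..} \<and> x 0 = y"
    have y0: "M * (dist y S)^2 < m * r^2" using delta_ok[OF m M _ y[unfolded \<delta>_def]] by simp
    have restrict: "solution_on f x {0..<T}" for T :: real
      unfolding solution_on_def
    proof
      fix t :: real assume "t \<in> {0..<T}"
      then have "t \<in> {0..}" by simp
      then have "(x has_vector_derivative f (x t)) (at t within {0..})" using H unfolding solution_on_def by blast
      then show "(x has_vector_derivative f (x t)) (at t within {0..<T})"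
        by (rule has_vector_derivative_within_subset) auto
    qed
    have bnd: "dist (x t) S \<le> sqrt (V y / m * exp (- c * t))" if t: "0 \<le> t" for t
    proof -
      have "\<forall>s\<in>{0..<t+1}. dist (x s) S < r \<and> V (x s) \<le> V (x 0) * exp (- c * s)"
        by (rule lyap_abstract[OF m Vlo Vhi Vd c dec refl restrict]) (use t r y0 H in auto)
      then have "V (x t) \<le> V y * exp (- c * t)" using t H by auto
      then have "m * (dist (x t) S)^2 \<le> V y * exp (- c * t)" using Vlo[of "x t"] by linarith
      then have "(dist (x t) S)^2 \<le> V y / m * exp (- c * t)" using m by (simp add: field_simps)
      then show ?thesis by (rule real_le_rsqrt)
    qed
    have lim0: "((\<lambda>t. sqrt (V y / m * exp (- c * t))) \<longlongrightarrow> 0) at_top"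
    proof -
      have "filterlim (\<lambda>t. - c * t) at_bot at_top"
        by (rule filterlim_tendsto_neg_mult_at_bot[OF tendsto_const _ filterlim_ident]) (use c in simp)
      from filterlim_compose[OF exp_at_bot this]
      have "((\<lambda>t. exp (- c * t)) \<longlongrightarrow> 0) at_top" .
      then have lim1: "((\<lambda>t. V y / m * exp (- c * t)) \<longlongrightarrow> V y / m * 0) at_top" by (intro tendsto_intros)
      show ?thesis using tendsto_real_sqrt[OF lim1] by simp
    qed
    have "((\<lambda>t. dist (x t) S) \<longlongrightarrow> 0) at_top"
    proof (rule Lim_null_comparison[OF _ lim0])
      show "\<forall>\<^sub>F t in at_top. norm (dist (x t) S) \<le> sqrt (V y / m * exp (- c * t))"
        unfolding eventually_at_top_linorder
      proof (intro exI[of _ 0] allI impI)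
        fix n :: real assume "0 \<le> n"
        then show "norm (dist (x n) S) \<le> sqrt (V y / m * exp (- c * n))" using bnd[of n] by simp
      qed
    qed
    then show "(x \<longlongrightarrow> S) at_top" by (rule tendsto_dist_iff[THEN iffD2])
  qed
qed

lemma cont_pos_near0:
  fixes Q :: "real \<Rightarrow> real"
  assumes "continuous_on UNIV Q" "Q 0 > 0"
  shows "\<exists>s>0. \<forall>x. 0 < x \<and> x < s \<longrightarrow> Q x > 0"
proof -
  have "(Q \<longlongrightarrow> Q 0) (at 0)" using assms(1) by (simp add: continuous_on_def)
  then obtain s where s: "s > 0" "\<And>x. x \<noteq> 0 \<Longrightarrow> norm (x - 0) < s \<Longrightarrow> norm (Q x - Q 0) < Q 0"
    using LIM_eq[THEN iffD1] assms(2) by metis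
  have "Q x > 0" if "0 < x" "x < s" for x using s(2)[of x] that by auto
  then show ?thesis using s(1) by blast
qed

lemma s_pos:
  fixes a1 a2 a3 a4 :: real
  assumes "a1 > 0" "a1 * a2 - a3 > 0" "a4 > 0" "a3 * (a1 * a2 - a3) - a1^2 * a4 > 0"
  shows "a2 - a3 / a1 > 0" "a4 / (a2 - a3 / a1) > 0" "a3 / a1 - a4 / (a2 - a3 / a1) > 0"
proof -
  have e2: "a2 - a3 / a1 = (a1 * a2 - a3) / a1" using assms(1) by (simp add: field_simps)
  show s2: "a2 - a3 / a1 > 0" unfolding e2 using assms by simp
  show "a4 / (a2 - a3 / a1) > 0" using s2 assms by simp
  have "a3 / a1 - a4 / (a2 - a3 / a1) = (a3 * (a1 * a2 - a3) - a1^2 * a4) / (a1 * (a1 * a2 - a3))"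
    unfolding e2 using assms(1,2) by (simp add: field_simps power2_eq_square)
  then show "a3 / a1 - a4 / (a2 - a3 / a1) > 0" using assms by simp
qed

theorem theorem3:
  fixes ma mb ga gb ka kb da db tha thb thaa A1 B1 :: real
    and na nb naa :: nat
    and ra rb pa pb :: real
  assumes pos: "ma > 0" "mb > 0" "ga > 0" "gb > 0" "ka > 0" "kb > 0"
      "da > 0" "db > 0" "tha > 0" "thb > 0" "thaa > 0"
    and nonneg: "A1 \<ge> 0" "B1 \<ge> 0"
    and npos: "na \<ge> 1" "nb \<ge> 1" "naa \<ge> 1"
    and steady: "gene_field ma mb ga gb ka kb da db tha thb thaa na nb naa A1 B1 (ra, rb, pa, pb) = 0"
    and ppos: "pa > 0" "pb > 0"
    and X_def: "X = ma * real naa * thaa ^ naa * pa ^ (naa - 1) / (thaa ^ naa + pa ^ naa)\<^sup>2"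
    and Y_def: "Y = - (ma * real nb * thb ^ nb * pb ^ (nb - 1) / (thb ^ nb + pb ^ nb)\<^sup>2)"
    and Z_def: "Z = - (mb * real na * pa ^ (na - 1) * tha ^ na / (pa ^ na + tha ^ na)\<^sup>2)"
    and e1_def: "e1 = ga + gb + da + db"
    and e2_def: "e2 = ga * gb + (ga + gb) * (da + db) + da * db - ka * X"
    and e3_def: "e3 = da * db * (ga + gb) + (da + db) * ga * gb - ka * (db + gb) * X"
    and e4_def: "e4 = ga * gb * da * db - ka * kb * Y * Z - ka * gb * db * X"
    and h1: "e1 > 0" and h3: "e3 > 0" and h4: "e4 > 0"
    and hR: "e1 * e2 * e3 - e1\<^sup>2 * e4 - e3\<^sup>2 > 0"
  shows "locally_asymptotically_stable
           (gene_field ma mb ga gb ka kb da db tha thb thaa na nb naa A1 B1) (ra, rb, pa, pb)"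
proof -
  define f where "f = gene_field ma mb ga gb ka kb da db tha thb thaa na nb naa A1 B1"
  define S where "S = (ra, rb, pa, pb)"
  have fS: "f S = 0" using steady by (simp add: f_def S_def)
  have "0 < thb ^ nb + pb ^ nb" using pos ppos by (simp add: add_pos_pos)
  then have "0 < ma * real nb * thb ^ nb * pb ^ (nb - 1) / (thb ^ nb + pb ^ nb)\<^sup>2"
    using pos ppos npos by (intro divide_pos_pos mult_pos_pos) auto
  then have "Y < 0" unfolding Y_def by linarith
  then have Yne: "Y \<noteq> 0" by simp
  have kne: "ka \<noteq> 0" "kb \<noteq> 0" using pos by auto
  define A1f where "A1f \<epsilon> = (ga-\<epsilon>) + (gb-\<epsilon>) + (da-\<epsilon>) + (db-\<epsilon>)" for \<epsilon> :: real
  define A2f where "A2f \<epsilon> = (ga-\<epsilon>) * (gb-\<epsilon>) + ((ga-\<epsilon>) + (gb-\<epsilon>)) * ((da-\<epsilon>) + (db-\<epsilon>)) + (da-\<epsilon>) * (db-\<epsilon>) - ka * X" for \<epsilon> :: real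
  define A3f where "A3f \<epsilon> = (da-\<epsilon>) * (db-\<epsilon>) * ((ga-\<epsilon>) + (gb-\<epsilon>)) + ((da-\<epsilon>) + (db-\<epsilon>)) * (ga-\<epsilon>) * (gb-\<epsilon>) - ka * ((db-\<epsilon>) + (gb-\<epsilon>)) * X" for \<epsilon> :: real
  define A4f where "A4f \<epsilon> = (ga-\<epsilon>) * (gb-\<epsilon>) * (da-\<epsilon>) * (db-\<epsilon>) - ka * kb * Y * Z - ka * (gb-\<epsilon>) * (db-\<epsilon>) * X" for \<epsilon> :: real
  define Q2 where "Q2 \<epsilon> = A1f \<epsilon> * A2f \<epsilon> - A3f \<epsilon>" for \<epsilon>
  define Q4 where "Q4 \<epsilon> = A3f \<epsilon> * (A1f \<epsilon> * A2f \<epsilon> - A3f \<epsilon>) - (A1f \<epsilon>)^2 * A4f \<epsilon>" for \<epsilon>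
  have at0: "A1f 0 = e1" "A2f 0 = e2" "A3f 0 = e3" "A4f 0 = e4"
    by (simp_all add: A1f_def A2f_def A3f_def A4f_def e1_def e2_def e3_def e4_def)
  have "e3 * (e1 * e2 - e3) = (e1 * e2 * e3 - e1\<^sup>2 * e4 - e3\<^sup>2) + e1\<^sup>2 * e4"
    by (simp add: algebra_simps power2_eq_square)
  also have "\<dots> > 0"
  proof -
    have "e1\<^sup>2 * e4 > 0" using h1 h4 by simp
    then show ?thesis using hR by linarith
  qed
  finally have "e1 * e2 - e3 > 0" using h3 by (simp add: zero_less_mult_iff)
  then have Q20: "Q2 0 > 0" by (simp add: Q2_def at0)
  have Q40: "Q4 0 > 0" using hR by (simp add: Q4_def at0 algebra_simps power2_eq_square)
  have c1: "continuous_on UNIV A1f" unfolding A1f_def by (intro continuous_intros)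
  have c2: "continuous_on UNIV Q2" unfolding Q2_def A1f_def A2f_def A3f_def by (intro continuous_intros)
  have c3: "continuous_on UNIV A4f" unfolding A4f_def by (intro continuous_intros)
  have c4: "continuous_on UNIV Q4" unfolding Q4_def A1f_def A2f_def A3f_def A4f_def by (intro continuous_intros)
  obtain s1 where s1: "s1 > 0" "\<And>x. 0 < x \<Longrightarrow> x < s1 \<Longrightarrow> A1f x > 0" using cont_pos_near0[OF c1] h1 at0 by auto
  obtain s2 where s2: "s2 > 0" "\<And>x. 0 < x \<Longrightarrow> x < s2 \<Longrightarrow> Q2 x > 0" using cont_pos_near0[OF c2 Q20] by auto
  obtain s3 where s3: "s3 > 0" "\<And>x. 0 < x \<Longrightarrow> x < s3 \<Longrightarrow> A4f x > 0" using cont_pos_near0[OF c3] h4 at0 by auto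
  obtain s4 where s4: "s4 > 0" "\<And>x. 0 < x \<Longrightarrow> x < s4 \<Longrightarrow> Q4 x > 0" using cont_pos_near0[OF c4 Q40] by auto
  define \<epsilon> where "\<epsilon> = min (min s1 s2) (min s3 s4) / 2"
  have \<epsilon>: "0 < \<epsilon>" "\<epsilon> < s1" "\<epsilon> < s2" "\<epsilon> < s3" "\<epsilon> < s4"
    using s1(1) s2(1) s3(1) s4(1) by (auto simp: \<epsilon>_def)
  have q: "A1f \<epsilon> > 0" "Q2 \<epsilon> > 0" "A4f \<epsilon> > 0" "Q4 \<epsilon> > 0"
    using s1(2) s2(2) s3(2) s4(2) \<epsilon> by auto
  interpret L: lin "ga - \<epsilon>" "gb - \<epsilon>" "da - \<epsilon>" "db - \<epsilon>" ka kb X Y Z .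
  have La: "L.a1 = A1f \<epsilon>" "L.a2 = A2f \<epsilon>" "L.a3 = A3f \<epsilon>" "L.a4 = A4f \<epsilon>"
    by (simp_all add: L.a1_def L.a2_def L.a3_def L.a4_def A1f_def A2f_def A3f_def A4f_def)
  have sp: "A2f \<epsilon> - A3f \<epsilon> / A1f \<epsilon> > 0" "A4f \<epsilon> / (A2f \<epsilon> - A3f \<epsilon> / A1f \<epsilon>) > 0"
      "A3f \<epsilon> / A1f \<epsilon> - A4f \<epsilon> / (A2f \<epsilon> - A3f \<epsilon> / A1f \<epsilon>) > 0"
    using s_pos[OF q(1) q(2)[unfolded Q2_def] q(3) q(4)[unfolded Q4_def]] by auto
  have Ls: "L.s1 > 0" "L.s2 > 0" "L.s3 > 0" "L.s4 > 0"
    using sp q(1) by (simp_all add: L.s1_def L.s2_def L.s3_def L.s4_def La)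
  obtain m M where m: "0 < m" and M: "0 < M" and mM: "\<And>h. m * (norm h)^2 \<le> L.Wq h" "\<And>h. L.Wq h \<le> M * (norm h)^2"
    using quad_bounds[OF L.Wq_cont L.Wq_exp(2) L.Wq_pos[OF Ls(2) Ls(3) Ls(4) kne Yne]] by blast
  define J0 where "J0 = lin.Jl ga gb da db ka kb X Y Z"
  have Jrel: "J0 h = L.Jl h - \<epsilon> *\<^sub>R h" for h
  proof -
    obtain h1 h2 h3 h4 where h: "h = (h1, h2, h3, h4)" by (cases h) auto
    show ?thesis unfolding h J0_def lin.Jl_def by (simp add: algebra_simps)
  qed
  have a1ne: "L.a1 \<noteq> 0" using q(1) La by simp
  have BJ: "L.Bq h (J0 h) \<le> - \<epsilon> * L.Wq h" for h
  proof -
    have "L.Bq h (J0 h) = L.Bq h (L.Jl h) - \<epsilon> * L.Bq h h" unfolding Jrel by (simp add: L.Bq_lin)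
    also have "\<dots> = - L.s1 * (L.w4 h)^2 - \<epsilon> * L.Wq h"
      using L.B_J[OF a1ne] Ls(2) by (simp add: L.Bq_lin)
    also have "\<dots> \<le> - \<epsilon> * L.Wq h" using Ls(1) by (simp add: mult_nonneg_nonneg)
    finally show ?thesis .
  qed
  have fd: "(f has_derivative J0) (at S)"
    unfolding f_def S_def J0_def by (rule gf_deriv[OF pos(1,2,9,10,11) npos ppos X_def Y_def Z_def])
  define \<eta> where "\<eta> = \<epsilon> * sqrt (m / (2 * M))"
  have \<eta>: "\<eta> > 0" using \<epsilon> m M by (simp add: \<eta>_def)
  have \<eta>2: "\<eta>^2 = \<epsilon>^2 * (m / (2 * M))" using m M by (simp add: \<eta>_def power_mult_distrib)
  obtain r where r: "r > 0" "\<And>y. norm (y - S) < r \<Longrightarrow> norm (f y - f S - J0 (y - S)) \<le> \<eta> * norm (y - S)"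
    using fd[unfolded has_derivative_at_alt] \<eta> by blast
  define V where "V u = L.Wq (u - S)" for u
  define DV where "DV u v = 2 * L.Bq (u - S) v" for u v
  have Vlo: "m * (dist u S)^2 \<le> V u" for u using mM(1) by (simp add: V_def dist_norm)
  have Vhi: "V u \<le> M * (dist u S)^2" for u using mM(2) by (simp add: V_def dist_norm)
  have Wnn: "0 \<le> L.Wq h" for h using L.Wq_nonneg[OF Ls(2) Ls(3) Ls(4)] .
  have Vd: "(V has_derivative DV u) (at u)" for u
    unfolding has_derivative_at_alt
  proof (intro conjI allI impI)
    have "linear (DV u)" by (rule linearI) (simp_all add: DV_def L.Bq_lin algebra_simps)
    then show "bounded_linear (DV u)" by (simp add: linear_conv_bounded_linear)
  next
    fix e :: real assume e: "0 < e"
    show "\<exists>d>0. \<forall>y. norm (y - u) < d \<longrightarrow> norm (V y - V u - DV u (y - u)) \<le> e * norm (y - u)"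
    proof (intro exI[of _ "e / M"] conjI allI impI)
      show "0 < e / M" using e M by simp
      fix y assume y: "norm (y - u) < e / M"
      have yS: "(u - S) + (y - u) = y - S" by (simp add: algebra_simps)
      have "L.Wq (y - S) = L.Wq (u - S) + 2 * L.Bq (u - S) (y - u) + L.Wq (y - u)"
        using L.Wq_exp(1)[of "u - S" "y - u"] unfolding yS .
      then have eq: "V y - V u - DV u (y - u) = L.Wq (y - u)"
        unfolding V_def DV_def by simp
      have "L.Wq (y - u) \<le> M * (norm (y - u))^2" by (rule mM(2))
      also have "\<dots> = M * norm (y - u) * norm (y - u)" by (simp add: power2_eq_square)
      also have "\<dots> \<le> M * (e / M) * norm (y - u)" using y M
        by (intro mult_right_mono mult_left_mono) auto
      also have "\<dots> = e * norm (y - u)" using M by simp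
      finally show "norm (V y - V u - DV u (y - u)) \<le> e * norm (y - u)" unfolding eq using Wnn[of "y - u"] by simp
    qed
  qed
  have dec: "DV u (f u) \<le> - (\<epsilon> / 2) * V u" if u: "u \<in> ball S r" for u
  proof -
    define h where "h = u - S"
    define R where "R = f u - J0 h"
    have nR: "norm R \<le> \<eta> * norm h"
      using r(2)[of u] u fS by (simp add: R_def h_def dist_norm norm_minus_commute)
    have fu: "f u = J0 h + R" by (simp add: R_def)
    have "0 \<le> L.Wq (\<epsilon> *\<^sub>R h - R)" by (rule Wnn)
    also have "\<dots> = \<epsilon>^2 * L.Wq h - 2 * (\<epsilon> * L.Bq h R) + L.Wq R"
      by (simp add: L.Wq_exp L.Bq_lin1)
    finally have i1: "2 * (\<epsilon> * L.Bq h R) \<le> \<epsilon>^2 * L.Wq h + L.Wq R" by simp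
    have "L.Wq R \<le> M * (norm R)^2" by (rule mM(2))
    also have "\<dots> \<le> M * (\<eta> * norm h)^2" using nR M by (intro mult_left_mono power_mono) auto
    also have "\<dots> = \<epsilon>^2 / 2 * (m * (norm h)^2)" using M unfolding power_mult_distrib \<eta>2 by (simp add: field_simps)
    also have "\<dots> \<le> \<epsilon>^2 / 2 * L.Wq h" by (intro mult_left_mono mM(1)) simp
    finally have i2: "L.Wq R \<le> \<epsilon>^2 / 2 * L.Wq h" .
    have "2 * (\<epsilon> * L.Bq h R) \<le> \<epsilon> * (3 / 2 * \<epsilon> * L.Wq h)" using i1 i2 by (simp add: power2_eq_square algebra_simps)
    then have i3: "2 * L.Bq h R \<le> 3 / 2 * \<epsilon> * L.Wq h" using \<epsilon>(1) by (simp add: mult.assoc)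
    have "DV u (f u) = 2 * L.Bq h (J0 h) + 2 * L.Bq h R" by (simp add: DV_def fu L.Bq_lin h_def)
    also have "\<dots> \<le> 2 * (- \<epsilon> * L.Wq h) + 3 / 2 * \<epsilon> * L.Wq h" using BJ[of h] i3 by linarith
    also have "\<dots> = - (\<epsilon> / 2) * V u" by (simp add: V_def h_def algebra_simps)
    finally show ?thesis .
  qed
  define g where "g u = f (clampS (pa / 2) (2 * pa) (pb / 2) (2 * pb) u)" for u
  obtain Lg where Lg: "Lg > 0" "\<And>u v. norm (g u - g v) \<le> Lg * norm (u - v)"
    using g_lip[OF pos npos, of "pa / 2" "2 * pa" "pb / 2" "2 * pb" A1 B1] ppos unfolding g_def f_def by auto
  define r0 where "r0 = min r (min (pa / 2) (pb / 2))"
  have r0: "0 < r0" "r0 \<le> r" "r0 \<le> pa / 2" "r0 \<le> pb / 2" using r(1) ppos by (auto simp: r0_def)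
  have gf: "g u = f u" if u: "u \<in> ball S r0" for u
  proof -
    have n: "norm (u - S) < r0" using u by (simp add: dist_norm norm_minus_commute)
    have "\<bar>fst (snd (snd (u - S)))\<bar> < pa / 2" using comp_le(3)[of "u - S"] n r0 by linarith
    then have "\<bar>fst (snd (snd u)) - pa\<bar> < pa / 2" by (simp add: S_def)
    then have "pa / 2 \<le> fst (snd (snd u))" "fst (snd (snd u)) \<le> 2 * pa" using ppos unfolding abs_less_iff by linarith+
    then have c3: "clp (pa / 2) (2 * pa) (fst (snd (snd u))) = fst (snd (snd u))"
      by (intro clamp_props(4)) auto
    have "\<bar>snd (snd (snd (u - S)))\<bar> < pb / 2" using comp_le(4)[of "u - S"] n r0 by linarith
    then have "\<bar>snd (snd (snd u)) - pb\<bar> < pb / 2" by (simp add: S_def)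
    then have "pb / 2 \<le> snd (snd (snd u))" "snd (snd (snd u)) \<le> 2 * pb" using ppos unfolding abs_less_iff by linarith+
    then have c4: "clp (pb / 2) (2 * pb) (snd (snd (snd u))) = snd (snd (snd u))"
      by (intro clamp_props(4)) auto
    show ?thesis unfolding g_def clampS_def c3 c4 by simp
  qed
  have dec0: "DV u (f u) \<le> - (\<epsilon> / 2) * V u" if "u \<in> ball S r0" for u
    using dec[of u] that r0(2) by auto
  have "locally_asymptotically_stable f S"
    by (rule las_from_lyap[OF fS m M Vlo Vhi Vd _ r0(1) dec0 Lg gf]) (use \<epsilon> in auto)
  then show ?thesis unfolding f_def S_def .
qed

end
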